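(* Let $p\in(0,1)$, let $C$ be a random symmetric $n\times n$ matrix whose entries on and above the diagonal are independent and equal to $\sqrt{(1-p)/p}$ with probability $p$ and $-\sqrt{p/(1-p)}$ with probability $1-p$. Let $M\in\mathbb{R}^{n\times n}$ be a deterministic matrix, $r_p=\sqrt{(1-p)/p}$, $E=r_p\,M\circ C$, and let $m_E$ be a median of $\|E\|_2$. Then for all $t>0$, $$P\big(|\|E\|_2-m_E|>t\big)\le4\exp\Big(-\frac{p^2}{8\|M\|_\infty^2}t^2\Big).$$ In particular, $$\mathbb{E}\big[\|E\|_2^2\big]\le m_E^2+32\frac{\|M\|_\infty^2}{p^2}+8m_E\sqrt{\frac{2\pi\|M\|_\infty^2}{p^2}}$$ and $$\mathbb{E}\big[\|E\|_2^3\big]\le4m_E^3+12\sqrt{\pi}\Big(\frac{8\|M\|_\infty^2}{p^2}\Big)^{3/2}.$$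
   Context: $\circ$ is the Hadamard product; $\|M\|_\infty=\max_{ij}|M_{ij}|$; $\|\cdot\|_2$ is the spectral norm. *)

theory Defs
  imports "HOL-Probability.Probability"
begin

definition hadamard :: "real^'n^'m \<Rightarrow> real^'n^'m \<Rightarrow> real^'n^'m" where
  "hadamard A B = (\<chi> i j. A $ i $ j * B $ i $ j)"

definition spec_norm :: "real^'n^'m \<Rightarrow> real" where
  "spec_norm A = onorm (\<lambda>x. A *v x)"

definition max_abs_entry :: "real^'n^'m \<Rightarrow> real" where
  "max_abs_entry A = Max {\<bar>A $ i $ j\<bar> | i j. True}"

text \<open>Index set of the independent entries of a symmetric matrix:
  unordered pairs {i,j} (i = j allowed), i.e. the entries on and above the diagonal.\<close>
definition sym_pairs :: "'n set set" where
  "sym_pairs = {{i, j} | i j. True}"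

definition sign_pmf :: "real \<Rightarrow> ('n::finite set \<Rightarrow> bool) pmf" where
  "sign_pmf p = Pi_pmf sym_pairs False (\<lambda>_. bernoulli_pmf p)"

definition C_mat :: "real \<Rightarrow> ('n::finite set \<Rightarrow> bool) \<Rightarrow> real^'n^'n" where
  "C_mat p b = (\<chi> i j. if b {i, j} then sqrt ((1 - p) / p) else - sqrt (p / (1 - p)))"

definition is_median :: "'a pmf \<Rightarrow> ('a \<Rightarrow> real) \<Rightarrow> real \<Rightarrow> bool" where
  "is_median D X m \<longleftrightarrow>
     measure_pmf.prob D {w. X w \<le> m} \<ge> 1/2 \<and> measure_pmf.prob D {w. X w \<ge> m} \<ge> 1/2"

end

theory Submission
  imports Defs
begin

inductive_set cvx :: "('a \<Rightarrow> real) set \<Rightarrow> ('a \<Rightarrow> real) set" for U where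
  base: "s \<in> U \<Longrightarrow> s \<in> cvx U"
| comb: "s1 \<in> cvx U \<Longrightarrow> s2 \<in> cvx U \<Longrightarrow> 0 \<le> l \<Longrightarrow> l \<le> 1 \<Longrightarrow>
     (\<lambda>i. l * s1 i + (1 - l) * s2 i) \<in> cvx U"

lemma cvx_mono: "s \<in> cvx U \<Longrightarrow> U \<subseteq> U' \<Longrightarrow> s \<in> cvx U'"
  by (induction s rule: cvx.induct) (auto intro: cvx.intros)

lemma cvx_nonempty: "U \<noteq> {} \<Longrightarrow> cvx U \<noteq> {}"
  using cvx.base by blast

definition SP :: "'i set \<Rightarrow> ('i \<Rightarrow> bool) set" where
  "SP I = (\<lambda>X i. i \<in> X) ` Pow I"

lemma SP_iff: "x \<in> SP I \<longleftrightarrow> (\<forall>i. i \<notin> I \<longrightarrow> \<not> x i)"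
proof
  assume "x \<in> SP I" then show "\<forall>i. i \<notin> I \<longrightarrow> \<not> x i" unfolding SP_def by auto
next
  assume h: "\<forall>i. i \<notin> I \<longrightarrow> \<not> x i"
  have "x = (\<lambda>i. i \<in> {i. x i})" by auto
  moreover have "{i. x i} \<in> Pow I" using h by auto
  ultimately show "x \<in> SP I" unfolding SP_def by blast
qed

lemma finite_SP: "finite I \<Longrightarrow> finite (SP I)"
  unfolding SP_def by simp

definition wt :: "(bool \<Rightarrow> real) \<Rightarrow> 'i set \<Rightarrow> ('i \<Rightarrow> bool) \<Rightarrow> real" where
  "wt q I x = (\<Prod>i\<in>I. q (x i))"

definition PP :: "(bool \<Rightarrow> real) \<Rightarrow> 'i set \<Rightarrow> ('i \<Rightarrow> bool) set \<Rightarrow> real" where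
  "PP q I A = (\<Sum>x\<in>SP I \<inter> A. wt q I x)"

definition UU :: "'i set \<Rightarrow> ('i \<Rightarrow> bool) set \<Rightarrow> ('i \<Rightarrow> bool) \<Rightarrow> ('i \<Rightarrow> real) set" where
  "UU I A x = {s. (\<forall>i. s i = 0 \<or> s i = 1) \<and> (\<forall>i. i \<notin> I \<longrightarrow> s i = 0) \<and>
                 (\<exists>y\<in>A. \<forall>i\<in>I. s i = 0 \<longrightarrow> y i = x i)}"

definition FF :: "'i set \<Rightarrow> ('i \<Rightarrow> real) \<Rightarrow> real" where
  "FF I s = (\<Sum>i\<in>I. (s i)^2)"

definition DD :: "'i set \<Rightarrow> ('i \<Rightarrow> bool) set \<Rightarrow> ('i \<Rightarrow> bool) \<Rightarrow> real" where
  "DD I A x = Inf (FF I ` cvx (UU I A x))"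

definition EE :: "(bool \<Rightarrow> real) \<Rightarrow> 'i set \<Rightarrow> ('i \<Rightarrow> bool) set \<Rightarrow> real" where
  "EE q I A = (\<Sum>x\<in>SP I. wt q I x * exp (DD I A x / 4))"

lemma FF_nonneg: "0 \<le> FF I s"
  unfolding FF_def by (simp add: sum_nonneg)

lemma UU_nonempty: "A \<noteq> {} \<Longrightarrow> UU I A x \<noteq> {}"
proof -
  assume "A \<noteq> {}" then obtain y where "y \<in> A" by blast
  then have "(\<lambda>i. if i \<in> I then 1 else 0) \<in> UU I A x" unfolding UU_def by auto
  then show ?thesis by blast
qed

lemma DD_le: "s \<in> cvx (UU I A x) \<Longrightarrow> DD I A x \<le> FF I s"
  unfolding DD_def by (rule cInf_lower) (auto intro: bdd_belowI[where m=0] FF_nonneg)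

lemma DD_nonneg: "A \<noteq> {} \<Longrightarrow> 0 \<le> DD I A x"
  unfolding DD_def
  by (rule cInf_greatest) (use cvx_nonempty[OF UU_nonempty[of A I x]] in \<open>auto simp: FF_nonneg\<close>)

lemma inf_helper:
  fixes X :: "real set"
  assumes "X \<noteq> {}" "\<And>x. x \<in> X \<Longrightarrow> c \<le> l * x" "0 \<le> l"
  shows "c \<le> l * Inf X"
proof (cases "l = 0")
  case True then show ?thesis using assms by fastforce
next
  case False
  then have lp: "0 < l" using assms by simp
  have "c / l \<le> Inf X"
    by (rule cInf_greatest) (use assms lp in \<open>auto simp: divide_le_eq mult.commute\<close>)
  then show ?thesis using lp by (simp add: divide_le_eq mult.commute)
qed

lemma cvx_zero_outside: "s \<in> cvx (UU I A x) \<Longrightarrow> i \<notin> I \<Longrightarrow> s i = 0"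
  by (induction s rule: cvx.induct) (auto simp: UU_def)

lemma SP_insert_split:
  assumes "a \<notin> I" "finite I"
  shows "(\<Sum>x\<in>SP (insert a I). h x) = (\<Sum>z\<in>SP I. h (z(a:=True))) + (\<Sum>z\<in>SP I. h (z(a:=False)))"
proof -
  have eq: "SP (insert a I) = (\<lambda>z. z(a:=True)) ` SP I \<union> (\<lambda>z. z(a:=False)) ` SP I"
  proof
    show "SP (insert a I) \<subseteq> (\<lambda>z. z(a:=True)) ` SP I \<union> (\<lambda>z. z(a:=False)) ` SP I"
    proof
      fix x assume x: "x \<in> SP (insert a I)"
      have xz: "x = (x(a:=False))(a := x a)" by auto
      have z: "x(a:=False) \<in> SP I" using x by (auto simp: SP_iff)
      show "x \<in> (\<lambda>z. z(a:=True)) ` SP I \<union> (\<lambda>z. z(a:=False)) ` SP I"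
      proof (cases "x a")
        case True then have "x = (x(a:=False))(a:=True)" using xz by simp
        then have "x \<in> (\<lambda>z. z(a:=True)) ` SP I" using z by (rule image_eqI)
        then show ?thesis by blast
      next
        case False then have "x = (x(a:=False))(a:=False)" using xz by simp
        then have "x \<in> (\<lambda>z. z(a:=False)) ` SP I" using z by (rule image_eqI)
        then show ?thesis by blast
      qed
    qed
  next
    show "(\<lambda>z. z(a:=True)) ` SP I \<union> (\<lambda>z. z(a:=False)) ` SP I \<subseteq> SP (insert a I)"
      by (auto simp: SP_iff)
  qed
  have inj: "inj_on (\<lambda>z. z(a:=w)) (SP I)" for w
  proof (rule inj_onI)
    fix z z' assume "z \<in> SP I" "z' \<in> SP I" "z(a:=w) = z'(a:=w)"
    note h = this
    show "z = z'"
    proof (rule ext)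
      fix i show "z i = z' i"
      proof (cases "i = a")
        case True then show ?thesis using h assms(1) by (auto simp: SP_iff)
      next
        case False
        have "(z(a:=w)) i = (z'(a:=w)) i" using h(3) by simp
        then show ?thesis using False by simp
      qed
    qed
  qed
  have disj: "(\<lambda>z. z(a:=True)) ` SP I \<inter> (\<lambda>z. z(a:=False)) ` SP I = {}"
    by (auto simp: fun_eq_iff) (metis fun_upd_same)
  show ?thesis
    unfolding eq
    by (subst sum.union_disjoint) (use assms finite_SP disj in \<open>auto simp: sum.reindex[OF inj]\<close>)
qed

lemma wt_upd: "a \<notin> I \<Longrightarrow> finite I \<Longrightarrow> wt q (insert a I) (z(a:=w)) = q w * wt q I z"
  unfolding wt_def by (auto intro!: prod.cong)

lemma wt_nonneg: "(\<forall>b. 0 \<le> q b) \<Longrightarrow> 0 \<le> wt q I x"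
  unfolding wt_def by (simp add: prod_nonneg)

lemma SP_empty: "SP {} = {\<lambda>_. False}"
  by (auto simp: SP_iff)

lemma wt_sum: "finite I \<Longrightarrow> q True + q False = 1 \<Longrightarrow> (\<Sum>x\<in>SP I. wt q I x) = 1"
proof (induction I rule: finite_induct)
  case empty then show ?case by (simp add: SP_empty wt_def)
next
  case (insert a I)
  then show ?case
    by (simp add: SP_insert_split wt_upd sum_distrib_left[symmetric] distrib_right[symmetric])
qed

lemma U_sub1:
  assumes "a \<notin> I"
  shows "UU I {z. z(a:=w) \<in> A} z \<subseteq> UU (insert a I) A (z(a:=w))"
proof
  fix s assume "s \<in> UU I {z. z(a:=w) \<in> A} z"
  then obtain y where s01: "\<forall>i. s i = 0 \<or> s i = 1" and s0: "\<forall>i. i \<notin> I \<longrightarrow> s i = 0"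
     and y: "y(a:=w) \<in> A" and yz: "\<forall>i\<in>I. s i = 0 \<longrightarrow> y i = z i"
    unfolding UU_def by auto
  have "\<forall>i\<in>insert a I. s i = 0 \<longrightarrow> (y(a:=w)) i = (z(a:=w)) i"
    using yz assms by auto
  then show "s \<in> UU (insert a I) A (z(a:=w))"
    unfolding UU_def using s01 s0 y assms by (intro CollectI conjI allI impI bexI[of _ "y(a:=w)"]) auto
qed

lemma U_sub2:
  assumes "a \<notin> I" "s \<in> UU I {z. \<exists>w. z(a:=w) \<in> A} z"
  shows "s(a:=1) \<in> UU (insert a I) A (z(a:=w))"
proof -
  obtain y w' where s01: "\<forall>i. s i = 0 \<or> s i = 1" and s0: "\<forall>i. i \<notin> I \<longrightarrow> s i = 0"
     and y: "y(a:=w') \<in> A" and yz: "\<forall>i\<in>I. s i = 0 \<longrightarrow> y i = z i"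
    using assms(2) unfolding UU_def by auto
  have "\<forall>i\<in>insert a I. (s(a:=1)) i = 0 \<longrightarrow> (y(a:=w')) i = (z(a:=w)) i"
    using yz assms by auto
  then show ?thesis
    unfolding UU_def using s01 s0 y assms(1) by (intro CollectI conjI allI impI bexI[of _ "y(a:=w')"]) auto
qed

lemma cvx_sub2:
  assumes "s \<in> cvx (UU I {z. \<exists>w. z(a:=w) \<in> A} z)" "a \<notin> I"
  shows "s(a:=1) \<in> cvx (UU (insert a I) A (z(a:=w)))"
  using assms(1)
proof (induction s rule: cvx.induct)
  case (base s) then show ?case using U_sub2[OF assms(2)] by (blast intro: cvx.base)
next
  case (comb s1 s2 l)
  have "(\<lambda>i. l * (s1(a:=1)) i + (1 - l) * (s2(a:=1)) i) \<in> cvx (UU (insert a I) A (z(a:=w)))"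
    using comb(5,6,3,4) by (rule cvx.comb)
  moreover have "(\<lambda>i. l * (s1(a:=1)) i + (1 - l) * (s2(a:=1)) i) = (\<lambda>i. l * s1 i + (1 - l) * s2 i)(a:=1)"
    by (auto simp: fun_eq_iff algebra_simps)
  ultimately show ?case by (simp only:)
qed

lemma FF_insert: "a \<notin> I \<Longrightarrow> finite I \<Longrightarrow> FF (insert a I) s = (s a)^2 + FF I s"
  unfolding FF_def by simp

lemma GEO0:
  assumes "a \<notin> I" "finite I" "{z. \<exists>w. z(a:=w) \<in> A} \<noteq> {}"
  shows "DD (insert a I) A (z(a:=w)) \<le> 1 + DD I {z. \<exists>w. z(a:=w) \<in> A} z"
proof -
  let ?B = "{z. \<exists>w. z(a:=w) \<in> A}"
  have "DD (insert a I) A (z(a:=w)) - 1 \<le> 1 * DD I ?B z"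
    unfolding DD_def[of I]
  proof (rule inf_helper)
    show "FF I ` cvx (UU I ?B z) \<noteq> {}" using cvx_nonempty[OF UU_nonempty[OF assms(3)]] by blast
  next
    fix v assume "v \<in> FF I ` cvx (UU I ?B z)"
    then obtain s where s: "s \<in> cvx (UU I ?B z)" and v: "v = FF I s" by blast
    have "DD (insert a I) A (z(a:=w)) \<le> FF (insert a I) (s(a:=1))"
      by (rule DD_le[OF cvx_sub2[OF s assms(1)]])
    also have "\<dots> = 1 + FF I s"
      using assms by (simp add: FF_insert) (auto simp: FF_def intro!: sum.cong)
    finally show "DD (insert a I) A (z(a:=w)) - 1 \<le> 1 * v" using v by simp
  qed simp
  then show ?thesis by simp
qed

lemma sq_convex: "0 \<le> l \<Longrightarrow> l \<le> 1 \<Longrightarrow> (l * u + (1 - l) * v)^2 \<le> l * u^2 + (1 - l) * (v::real)^2"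
proof -
  assume "0 \<le> l" "l \<le> 1"
  have "l * u^2 + (1 - l) * v^2 - (l * u + (1 - l) * v)^2 = l * (1 - l) * (u - v)^2"
    by (simp add: power2_eq_square algebra_simps)
  moreover have "0 \<le> l * (1 - l) * (u - v)^2" using \<open>0 \<le> l\<close> \<open>l \<le> 1\<close> by simp
  ultimately show ?thesis by linarith
qed

lemma GEO1:
  assumes "a \<notin> I" "finite I" "{z. z(a:=w) \<in> A} \<noteq> {}" "{z. \<exists>w. z(a:=w) \<in> A} \<noteq> {}"
    and l: "0 \<le> l" "l \<le> 1"
  shows "DD (insert a I) A (z(a:=w)) \<le> (1 - l)^2 + l * DD I {z. z(a:=w) \<in> A} z
            + (1 - l) * DD I {z. \<exists>w. z(a:=w) \<in> A} z"
proof -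
  let ?B = "{z. \<exists>w. z(a:=w) \<in> A}" and ?A1 = "{z. z(a:=w) \<in> A}"
  let ?D = "DD (insert a I) A (z(a:=w))"
  have key: "?D \<le> (1 - l)^2 + l * FF I s1 + (1 - l) * FF I s2"
    if s1: "s1 \<in> cvx (UU I ?A1 z)" and s2: "s2 \<in> cvx (UU I ?B z)" for s1 s2
  proof -
    let ?t = "\<lambda>i. l * s1 i + (1 - l) * (s2(a:=1)) i"
    have t: "?t \<in> cvx (UU (insert a I) A (z(a:=w)))"
      by (rule cvx.comb[OF cvx_mono[OF s1 U_sub1[OF assms(1)]] cvx_sub2[OF s2 assms(1)] l])
    have s1a: "s1 a = 0" using cvx_zero_outside[OF s1] assms(1) by simp
    have "?D \<le> FF (insert a I) ?t" by (rule DD_le[OF t])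
    also have "\<dots> = (1 - l)^2 + (\<Sum>i\<in>I. (l * s1 i + (1 - l) * s2 i)^2)"
      using assms(1,2) s1a by (simp add: FF_insert FF_def) (intro sum.cong, auto)
    also have "\<dots> \<le> (1 - l)^2 + (\<Sum>i\<in>I. l * (s1 i)^2 + (1 - l) * (s2 i)^2)"
      by (intro add_left_mono sum_mono sq_convex l)
    also have "\<dots> = (1 - l)^2 + l * FF I s1 + (1 - l) * FF I s2"
      by (simp add: FF_def sum.distrib sum_distrib_left)
    finally show ?thesis .
  qed
  have ne1: "FF I ` cvx (UU I ?A1 z) \<noteq> {}" using cvx_nonempty[OF UU_nonempty[OF assms(3)]] by blast
  have ne2: "FF I ` cvx (UU I ?B z) \<noteq> {}" using cvx_nonempty[OF UU_nonempty[OF assms(4)]] by blast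
  have step1: "?D - (1 - l)^2 - l * DD I ?A1 z \<le> (1 - l) * FF I s2"
    if s2: "s2 \<in> cvx (UU I ?B z)" for s2
  proof -
    have "?D - (1 - l)^2 - (1 - l) * FF I s2 \<le> l * DD I ?A1 z"
      unfolding DD_def[of I ?A1]
    proof (rule inf_helper[OF ne1])
      fix v assume "v \<in> FF I ` cvx (UU I ?A1 z)"
      then obtain s1 where s1: "s1 \<in> cvx (UU I ?A1 z)" and v: "v = FF I s1" by blast
      show "?D - (1 - l)^2 - (1 - l) * FF I s2 \<le> l * v" using key[OF s1 s2] unfolding v by linarith
    qed (use l in simp)
    then show ?thesis by linarith
  qed
  have "?D - (1 - l)^2 - l * DD I ?A1 z \<le> (1 - l) * DD I ?B z"
    unfolding DD_def[of I ?B]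
  proof (rule inf_helper[OF ne2])
    fix v assume "v \<in> FF I ` cvx (UU I ?B z)"
    then obtain s2 where s2: "s2 \<in> cvx (UU I ?B z)" and v: "v = FF I s2" by blast
    show "?D - (1 - l)^2 - l * DD I ?A1 z \<le> (1 - l) * v" using step1[OF s2] unfolding v by linarith
  qed (use l in simp)
  then show ?thesis by linarith
qed

lemma N1: "exp (1/4) + exp (-1/2) \<le> (2::real)"
proof -
  have "1 + 1/2 \<le> exp (1/2::real)" by (rule exp_ge_add_one_self)
  then have e1: "exp (-1/2::real) \<le> 2/3"
    by (simp add: exp_minus divide_simps)
  have "1 + (-1/4) \<le> exp (-1/4::real)" by (rule exp_ge_add_one_self)
  then have h: "3/4 \<le> exp (-1/4::real)" by simp
  have "exp (1/4::real) * (3/4) \<le> exp (1/4) * exp (-1/4)"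
    by (rule mult_left_mono[OF h]) simp
  also have "\<dots> = 1" by (simp add: exp_add[symmetric])
  finally have e2: "exp (1/4::real) \<le> 4/3" by simp
  show ?thesis using e1 e2 by simp
qed

lemma N2aux:
  fixes u :: real
  assumes "0 \<le> u" "u \<le> 1/2"
  shows "(1 - 2*u) * exp (2*u - u^2) \<le> 1"
proof -
  let ?k = "\<lambda>x::real. (1 - 2*x) * exp (2*x - x^2)"
  have "?k u \<le> ?k 0"
  proof (rule DERIV_nonpos_imp_nonincreasing[OF assms(1)])
    fix x assume x: "0 \<le> x" "x \<le> u"
    have "(?k has_real_derivative (exp (2*x - x^2) * (4*x^2 - 6*x))) (at x)"
      by (auto intro!: derivative_eq_intros simp: algebra_simps power2_eq_square)
    moreover have "exp (2*x - x^2) * (4*x^2 - 6*x) \<le> 0"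
    proof -
      have "4*x^2 - 6*x = 2*x*(2*x - 3)" by (simp add: power2_eq_square algebra_simps)
      also have "\<dots> \<le> 0" using x assms by (intro mult_nonneg_nonpos) auto
      finally show ?thesis by (simp add: mult_nonneg_nonpos)
    qed
    ultimately show "\<exists>y. (?k has_real_derivative y) (at x) \<and> y \<le> 0" by blast
  qed
  then show ?thesis by simp
qed

lemma N2:
  fixes u :: real
  assumes "0 \<le> u" "u \<le> 1/2"
  shows "exp (u - u^2) + exp (-u) \<le> 2"
proof -
  let ?h = "\<lambda>x::real. exp (x - x^2) + exp (-x)"
  have "?h u \<le> ?h 0"
  proof (rule DERIV_nonpos_imp_nonincreasing[OF assms(1)])
    fix x assume x: "0 \<le> x" "x \<le> u"
    have "(?h has_real_derivative ((1 - 2*x) * exp (x - x^2) - exp (-x))) (at x)"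
      by (auto intro!: derivative_eq_intros simp: algebra_simps power2_eq_square)
    moreover have "(1 - 2*x) * exp (x - x^2) - exp (-x) \<le> 0"
    proof -
      have "exp (x - x^2) = exp (-x) * exp (2*x - x^2)" by (simp add: exp_add[symmetric])
      then have "(1 - 2*x) * exp (x - x^2) = exp (-x) * ((1 - 2*x) * exp (2*x - x^2))" by simp
      also have "\<dots> \<le> exp (-x) * 1"
        using N2aux[of x] x assms by (intro mult_left_mono) auto
      finally show ?thesis by simp
    qed
    ultimately show "\<exists>y. (?h has_real_derivative y) (at x) \<and> y \<le> 0" by blast
  qed
  then show ?thesis by simp
qed

lemma NUM:
  fixes r :: real
  assumes "exp (-1/2) < r" "r \<le> 1"
  shows "exp ((1 - (1 + 2 * ln r))^2 / 4) * r powr (- (1 + 2 * ln r)) \<le> 2 - r"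
proof -
  have rpos: "0 < r" using assms(1) by (meson exp_gt_zero less_trans)
  define u where "u = - ln r"
  have u0: "0 \<le> u" using assms rpos by (simp add: u_def)
  have "-1/2 < ln r" using assms(1) rpos by (metis ln_exp ln_less_cancel_iff exp_gt_zero)
  then have u1: "u \<le> 1/2" by (simp add: u_def)
  have r: "r = exp (-u)" using rpos by (simp add: u_def)
  have "exp ((1 - (1 + 2 * ln r))^2 / 4) * r powr (- (1 + 2 * ln r)) = exp (u - u^2)"
    using rpos by (simp add: powr_def exp_add[symmetric] u_def power2_eq_square algebra_simps)
  also have "\<dots> \<le> 2 - r" using N2[OF u0 u1] r by simp
  finally show ?thesis .
qed

lemma holder_sum:
  fixes w a b :: "'x \<Rightarrow> real"
  assumes "finite S" "\<And>x. x \<in> S \<Longrightarrow> 0 \<le> w x" "\<And>x. x \<in> S \<Longrightarrow> 0 < a x"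
      "\<And>x. x \<in> S \<Longrightarrow> 0 < b x" "0 \<le> l" "l \<le> 1"
  shows "(\<Sum>x\<in>S. w x * (a x powr l * b x powr (1 - l)))
          \<le> (\<Sum>x\<in>S. w x * a x) powr l * (\<Sum>x\<in>S. w x * b x) powr (1 - l)"
proof -
  let ?A = "\<Sum>x\<in>S. w x * a x" and ?B = "\<Sum>x\<in>S. w x * b x"
  have A0: "0 \<le> ?A" by (intro sum_nonneg mult_nonneg_nonneg) (use assms in \<open>auto intro: less_imp_le\<close>)
  have B0: "0 \<le> ?B" by (intro sum_nonneg mult_nonneg_nonneg) (use assms in \<open>auto intro: less_imp_le\<close>)
  show ?thesis
  proof (cases "?A = 0 \<or> ?B = 0")
    case True
    have "\<forall>x\<in>S. w x = 0"
    proof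
      fix x assume x: "x \<in> S"
      show "w x = 0"
      proof (cases "?A = 0")
        case True
        have wa: "\<And>x. x \<in> S \<Longrightarrow> 0 \<le> w x * a x" using assms by (simp add: less_imp_le)
        have "w x * a x = 0" using sum_nonneg_eq_0_iff[of S "\<lambda>x. w x * a x"] assms(1) wa True x by blast
        then show ?thesis using assms(3)[OF x] by simp
      next
        case False
        then have "?B = 0" using \<open>?A = 0 \<or> ?B = 0\<close> by simp
        have wb: "\<And>x. x \<in> S \<Longrightarrow> 0 \<le> w x * b x" using assms by (simp add: less_imp_le)
        have "w x * b x = 0" using sum_nonneg_eq_0_iff[of S "\<lambda>x. w x * b x"] assms(1) wb \<open>?B = 0\<close> x by blast
        then show ?thesis using assms(4)[OF x] by simp
      qed
    qed
    then show ?thesis by simp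
  next
    case False
    then have Ap: "0 < ?A" and Bp: "0 < ?B" using A0 B0 by auto
    have trm: "a x powr l * b x powr (1 - l) \<le> ?A powr l * ?B powr (1 - l) * (l * (a x / ?A) + (1 - l) * (b x / ?B))"
      if x: "x \<in> S" for x
    proof -
      have "(a x / ?A) powr l * (b x / ?B) powr (1 - l) \<le> l * (a x / ?A) + (1 - l) * (b x / ?B)"
        using assms(3,4)[OF x] Ap Bp assms(5,6) by (intro Youngs_inequality_0) auto
      moreover have "(a x / ?A) powr l * (b x / ?B) powr (1 - l) = (a x powr l * b x powr (1 - l)) / (?A powr l * ?B powr (1 - l))"
        using assms(3,4)[OF x] Ap Bp by (simp add: powr_divide)
      moreover have "0 < ?A powr l * ?B powr (1 - l)" using Ap Bp by simp
      ultimately show ?thesis by (simp add: divide_le_eq mult.commute)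
    qed
    have "(\<Sum>x\<in>S. w x * (a x powr l * b x powr (1 - l)))
        \<le> (\<Sum>x\<in>S. w x * (?A powr l * ?B powr (1 - l) * (l * (a x / ?A) + (1 - l) * (b x / ?B))))"
      using trm assms(2) by (intro sum_mono mult_left_mono) auto
    also have "\<dots> = (\<Sum>x\<in>S. (?A powr l * ?B powr (1 - l) * l / ?A) * (w x * a x) + (?A powr l * ?B powr (1 - l) * (1 - l) / ?B) * (w x * b x))"
      by (intro sum.cong refl) (simp add: algebra_simps)
    also have "\<dots> = (?A powr l * ?B powr (1 - l) * l / ?A) * ?A + (?A powr l * ?B powr (1 - l) * (1 - l) / ?B) * ?B"
      by (simp add: sum.distrib sum_distrib_left)
    also have "\<dots> = ?A powr l * ?B powr (1 - l) * l + ?A powr l * ?B powr (1 - l) * (1 - l)" using Ap Bp by simp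
    also have "\<dots> = ?A powr l * ?B powr (1 - l)" by (simp add: algebra_simps)
    finally show ?thesis .
  qed
qed

lemma PP_sum: "finite I \<Longrightarrow> PP q I A = (\<Sum>x\<in>SP I. if x \<in> A then wt q I x else 0)"
  unfolding PP_def by (simp add: sum.inter_restrict finite_SP)

lemma PP_split:
  assumes "a \<notin> I" "finite I"
  shows "PP q (insert a I) A = q True * PP q I {z. z(a:=True) \<in> A} + q False * PP q I {z. z(a:=False) \<in> A}"
proof -
  have h: "(if z(a:=w) \<in> A then wt q (insert a I) (z(a:=w)) else 0) = q w * (if z \<in> {z. z(a:=w) \<in> A} then wt q I z else 0)" for w z
    using assms by (simp add: wt_upd)
  have "PP q (insert a I) A = (\<Sum>x\<in>SP (insert a I). if x \<in> A then wt q (insert a I) x else 0)"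
    using assms by (simp add: PP_sum)
  also have "\<dots> = (\<Sum>z\<in>SP I. if z(a:=True) \<in> A then wt q (insert a I) (z(a:=True)) else 0)
      + (\<Sum>z\<in>SP I. if z(a:=False) \<in> A then wt q (insert a I) (z(a:=False)) else 0)"
    by (rule SP_insert_split[OF assms])
  also have "\<dots> = q True * PP q I {z. z(a:=True) \<in> A} + q False * PP q I {z. z(a:=False) \<in> A}"
    unfolding h using assms by (simp only: PP_sum sum_distrib_left)
  finally show ?thesis .
qed

lemma EE_split:
  assumes "a \<notin> I" "finite I"
  shows "EE q (insert a I) A = q True * (\<Sum>z\<in>SP I. wt q I z * exp (DD (insert a I) A (z(a:=True)) / 4))
        + q False * (\<Sum>z\<in>SP I. wt q I z * exp (DD (insert a I) A (z(a:=False)) / 4))"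
  unfolding EE_def SP_insert_split[OF assms] wt_upd[OF assms] sum_distrib_left mult.assoc ..

lemma PP_mono: "(\<forall>b. 0 \<le> q b) \<Longrightarrow> finite I \<Longrightarrow> A \<subseteq> B \<Longrightarrow> PP q I A \<le> PP q I B"
  unfolding PP_def by (intro sum_mono2) (auto simp: finite_SP wt_nonneg)

lemma PP_nonneg: "(\<forall>b. 0 \<le> q b) \<Longrightarrow> 0 \<le> PP q I A"
  unfolding PP_def by (intro sum_nonneg) (auto simp: wt_nonneg)

lemma PP_empty: "PP q I {} = 0"
  unfolding PP_def by simp

lemma EE_nonneg: "(\<forall>b. 0 \<le> q b) \<Longrightarrow> 0 \<le> EE q I A"
  unfolding EE_def by (intro sum_nonneg mult_nonneg_nonneg) (auto simp: wt_nonneg)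

lemma powr_calc:
  fixes PB Pw l :: real
  assumes "0 < PB" "0 < Pw"
  shows "PB * ((1 / Pw) powr l * (1 / PB) powr (1 - l)) = (Pw / PB) powr (- l)"
proof -
  have "PB * ((1 / Pw) powr l * (1 / PB) powr (1 - l)) = exp (ln PB) * (exp (l * (- ln Pw)) * exp ((1 - l) * (- ln PB)))"
    using assms by (simp add: powr_def ln_div)
  also have "\<dots> = exp (- l * (ln Pw - ln PB))"
    by (simp add: exp_add[symmetric] algebra_simps)
  also have "\<dots> = (Pw / PB) powr (- l)"
    using assms by (simp add: powr_def ln_div)
  finally show ?thesis .
qed

theorem talagrand:
  assumes q0: "\<forall>b. 0 \<le> q b" and q1: "q True + q False = 1" and fin: "finite I"
  shows "PP q I A * EE q I A \<le> 1"
  using fin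
proof (induction I arbitrary: A rule: finite_induct)
  case empty
  show ?case
  proof (cases "(\<lambda>_. False) \<in> A")
    case False
    then have "PP q {} A = 0" unfolding PP_def by (simp add: SP_empty)
    then show ?thesis by simp
  next
    case True
    then have ne: "A \<noteq> {}" by blast
    have P1: "PP q {} A = 1" using True unfolding PP_def by (simp add: SP_empty wt_def)
    obtain s where s: "s \<in> cvx (UU {} A (\<lambda>_. False))"
      using cvx_nonempty[OF UU_nonempty[OF ne]] by blast
    have "DD {} A (\<lambda>_. False) \<le> 0" using DD_le[OF s] by (simp add: FF_def)
    moreover have "0 \<le> DD {} A (\<lambda>_. False)" by (rule DD_nonneg[OF ne])
    ultimately have "DD {} A (\<lambda>_. False) = 0" by simp
    then have "EE q {} A = 1" unfolding EE_def by (simp add: SP_empty wt_def)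
    then show ?thesis using P1 by simp
  qed
next
  case (insert a I)
  note aI = insert(2) and finI = insert(1)
  let ?B = "{z. \<exists>w. z(a:=w) \<in> A}"
  let ?Aw = "\<lambda>w. {z. z(a:=w) \<in> A}"
  let ?G = "\<lambda>w. (\<Sum>z\<in>SP I. wt q I z * exp (DD (insert a I) A (z(a:=w)) / 4))"
  let ?PB = "PP q I ?B"
  have sub: "?Aw w \<subseteq> ?B" for w by blast
  have Pw_le: "PP q I (?Aw w) \<le> ?PB" for w by (rule PP_mono[OF q0 finI sub])
  have Pw_ge: "0 \<le> PP q I (?Aw w)" for w by (rule PP_nonneg[OF q0])
  have PJ: "PP q (insert a I) A = q True * PP q I (?Aw True) + q False * PP q I (?Aw False)"
    by (rule PP_split[OF aI finI])
  have EJ: "EE q (insert a I) A = q True * ?G True + q False * ?G False"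
    by (rule EE_split[OF aI finI])
  show ?case
  proof (cases "?PB = 0")
    case True
    then have "PP q I (?Aw w) = 0" for w using Pw_le[of w] Pw_ge[of w] by simp
    then have "PP q (insert a I) A = 0" using PJ by simp
    then show ?thesis by simp
  next
    case False
    then have PBpos: "0 < ?PB" using PP_nonneg[OF q0, of I ?B] by simp
    have Bne: "?B \<noteq> {}"
    proof
      assume "?B = {}" then have "?PB = 0" by (simp add: PP_empty)
      with False show False by simp
    qed
    have IHB: "?PB * EE q I ?B \<le> 1" by (rule insert.IH)
    have Gw: "?PB * ?G w \<le> 2 - PP q I (?Aw w) / ?PB" for w
    proof -
      let ?Pw = "PP q I (?Aw w)"
      let ?r = "?Pw / ?PB"
      have r0: "0 \<le> ?r" using Pw_ge[of w] PBpos by simp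
      have r1: "?r \<le> 1" using Pw_le[of w] PBpos by (simp add: divide_le_eq_1)
      have IHw: "?Pw * EE q I (?Aw w) \<le> 1" by (rule insert.IH)
      show ?thesis
      proof (cases "?r \<le> exp (-1/2)")
        case True
        have "?G w \<le> (\<Sum>z\<in>SP I. wt q I z * (exp (1/4) * exp (DD I ?B z / 4)))"
        proof (intro sum_mono mult_left_mono)
          fix z assume "z \<in> SP I"
          have "DD (insert a I) A (z(a:=w)) \<le> 1 + DD I ?B z" by (rule GEO0[OF aI finI Bne])
          then have "exp (DD (insert a I) A (z(a:=w)) / 4) \<le> exp ((1 + DD I ?B z) / 4)" by simp
          also have "\<dots> = exp (1/4) * exp (DD I ?B z / 4)" by (simp add: exp_add[symmetric] add_divide_distrib)
          finally show "exp (DD (insert a I) A (z(a:=w)) / 4) \<le> exp (1/4) * exp (DD I ?B z / 4)" .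
        qed (simp add: wt_nonneg q0)
        also have "\<dots> = exp (1/4) * EE q I ?B"
          unfolding EE_def by (simp add: sum_distrib_left algebra_simps)
        finally have "?PB * ?G w \<le> ?PB * (exp (1/4) * EE q I ?B)" using PBpos by simp
        also have "\<dots> = exp (1/4) * (?PB * EE q I ?B)" by simp
        also have "\<dots> \<le> exp (1/4) * 1" using IHB by (intro mult_left_mono) auto
        also have "\<dots> \<le> 2 - exp (-1/2)" using N1 by simp
        also have "\<dots> \<le> 2 - ?r" using True by simp
        finally show ?thesis .
      next
        case False
        then have rgt: "exp (-1/2) < ?r" by simp
        have rpos: "0 < ?r" using rgt exp_gt_zero[of "-1/2"] by linarith
        then have Pwpos: "0 < ?Pw" using PBpos by (simp add: zero_less_divide_iff)
        have Awne: "?Aw w \<noteq> {}"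
        proof
          assume "?Aw w = {}" then have "?Pw = 0" by (simp add: PP_empty)
          with Pwpos show False by simp
        qed
        define l where "l = 1 + 2 * ln ?r"
        have lnr1: "ln ?r \<le> 0" using r1 rpos by simp
        have lnr2: "-1/2 < ln ?r" using rgt rpos by (metis ln_exp ln_less_cancel_iff exp_gt_zero)
        have l0: "0 \<le> l" and l1: "l \<le> 1" using lnr1 lnr2 by (auto simp: l_def)
        let ?E1 = "EE q I (?Aw w)" and ?E2 = "EE q I ?B"
        have "?G w \<le> (\<Sum>z\<in>SP I. wt q I z * (exp ((1 - l)^2 / 4) *
                 (exp (DD I (?Aw w) z / 4) powr l * exp (DD I ?B z / 4) powr (1 - l))))"
        proof (intro sum_mono mult_left_mono)
          fix z assume "z \<in> SP I"
          have "DD (insert a I) A (z(a:=w)) \<le> (1 - l)^2 + l * DD I (?Aw w) z + (1 - l) * DD I ?B z"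
            by (rule GEO1[OF aI finI Awne Bne l0 l1])
          then have "exp (DD (insert a I) A (z(a:=w)) / 4) \<le> exp (((1 - l)^2 + l * DD I (?Aw w) z + (1 - l) * DD I ?B z) / 4)"
            by simp
          also have "\<dots> = exp ((1 - l)^2 / 4) * (exp (DD I (?Aw w) z / 4) powr l * exp (DD I ?B z / 4) powr (1 - l))"
          proof -
            have e: "((1 - l)^2 + l * DD I (?Aw w) z + (1 - l) * DD I ?B z) / 4
                = (1 - l)^2 / 4 + (l * (DD I (?Aw w) z / 4) + (1 - l) * (DD I ?B z / 4))"
              by (simp add: field_simps)
            show ?thesis unfolding e exp_add by (simp add: powr_def)
          qed
          finally show "exp (DD (insert a I) A (z(a:=w)) / 4) \<le> exp ((1 - l)^2 / 4) * (exp (DD I (?Aw w) z / 4) powr l * exp (DD I ?B z / 4) powr (1 - l))" .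
        qed (simp add: wt_nonneg q0)
        also have "\<dots> = exp ((1 - l)^2 / 4) * (\<Sum>z\<in>SP I. wt q I z *
                 (exp (DD I (?Aw w) z / 4) powr l * exp (DD I ?B z / 4) powr (1 - l)))"
          by (simp add: sum_distrib_left algebra_simps)
        also have "\<dots> \<le> exp ((1 - l)^2 / 4) * (?E1 powr l * ?E2 powr (1 - l))"
          unfolding EE_def
          by (intro mult_left_mono holder_sum) (auto simp: finite_SP finI wt_nonneg q0 l0 l1)
        also have "\<dots> \<le> exp ((1 - l)^2 / 4) * ((1 / ?Pw) powr l * (1 / ?PB) powr (1 - l))"
        proof (intro mult_left_mono mult_mono powr_mono2)
          show "?E1 \<le> 1 / ?Pw" using IHw Pwpos by (simp add: field_simps)
          show "?E2 \<le> 1 / ?PB" using IHB PBpos by (simp add: field_simps)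
        qed (use l0 l1 EE_nonneg[OF q0] in auto)
        finally have "?PB * ?G w \<le> ?PB * (exp ((1 - l)^2 / 4) * ((1 / ?Pw) powr l * (1 / ?PB) powr (1 - l)))"
          using PBpos by simp
        also have "\<dots> = exp ((1 - l)^2 / 4) * (?PB * ((1 / ?Pw) powr l * (1 / ?PB) powr (1 - l)))" by simp
        also have "\<dots> = exp ((1 - l)^2 / 4) * ?r powr (- l)" using powr_calc[OF PBpos Pwpos] by simp
        also have "\<dots> \<le> 2 - ?r" unfolding l_def by (rule NUM[OF rgt r1])
        finally show ?thesis .
      qed
    qed
    define u where "u = PP q (insert a I) A / ?PB"
    have u0: "0 \<le> u" unfolding u_def using PP_nonneg[OF q0, of "insert a I" A] PBpos by simp
    have "?PB * EE q (insert a I) A = q True * (?PB * ?G True) + q False * (?PB * ?G False)"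
      using EJ by (simp add: algebra_simps)
    also have "\<dots> \<le> q True * (2 - PP q I (?Aw True) / ?PB) + q False * (2 - PP q I (?Aw False) / ?PB)"
      using Gw q0 by (intro add_mono mult_left_mono) auto
    also have "\<dots> = 2 * (q True + q False) - (q True * PP q I (?Aw True) + q False * PP q I (?Aw False)) / ?PB"
      by (simp add: algebra_simps add_divide_distrib)
    also have "\<dots> = 2 - u" using q1 PJ by (simp add: u_def)
    finally have h: "?PB * EE q (insert a I) A \<le> 2 - u" .
    have "PP q (insert a I) A * EE q (insert a I) A = u * (?PB * EE q (insert a I) A)"
      using PBpos by (simp add: u_def)
    also have "\<dots> \<le> u * (2 - u)" using h u0 by (intro mult_left_mono)
    also have "\<dots> \<le> 1" proof -
      have "0 \<le> (u - 1)^2" by simp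
      then show ?thesis by (simp add: power2_eq_square algebra_simps)
    qed
    finally show ?thesis .
  qed
qed

lemma norm_sq_vec: "(norm (v :: real^'n))^2 = (\<Sum>j\<in>UNIV. (v$j)^2)"
  unfolding power2_norm_eq_inner inner_vec_def by (simp add: power2_eq_square)

lemma spec_norm_frob:
  fixes X :: "real^'n^'m"
  shows "spec_norm X \<le> sqrt (\<Sum>i\<in>UNIV. \<Sum>j\<in>UNIV. (X$i$j)^2)"
  unfolding spec_norm_def
proof (rule onorm_bound)
  show "0 \<le> sqrt (\<Sum>i\<in>UNIV. \<Sum>j\<in>UNIV. (X$i$j)^2)" by (simp add: sum_nonneg)
next
  fix v :: "real^'n"
  have "(norm (X *v v))^2 = (\<Sum>i\<in>UNIV. (\<Sum>j\<in>UNIV. X$i$j * v$j)^2)"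
    by (simp add: norm_sq_vec matrix_vector_mult_def)
  also have "\<dots> \<le> (\<Sum>i\<in>UNIV. (\<Sum>j\<in>UNIV. (X$i$j)^2) * (\<Sum>j\<in>UNIV. (v$j)^2))"
    by (intro sum_mono Cauchy_Schwarz_ineq_sum)
  also have "\<dots> = (sqrt (\<Sum>i\<in>UNIV. \<Sum>j\<in>UNIV. (X$i$j)^2) * norm v)^2"
    by (simp add: power_mult_distrib norm_sq_vec sum_distrib_right sum_nonneg)
  finally show "norm (X *v v) \<le> sqrt (\<Sum>i\<in>UNIV. \<Sum>j\<in>UNIV. (X$i$j)^2) * norm v"
    by (rule power2_le_imp_le) (simp add: sum_nonneg)
qed

lemma spec_norm_triangle: "spec_norm (X + Y) \<le> spec_norm X + spec_norm (Y :: real^'n^'m)"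
  unfolding spec_norm_def matrix_vector_mult_add_rdistrib
  by (rule onorm_triangle) (rule matrix_vector_mul_bounded_linear)+

lemma spec_norm_scale: "spec_norm (c *\<^sub>R X) = \<bar>c\<bar> * spec_norm (X :: real^'n^'m)"
  unfolding spec_norm_def scaleR_matrix_vector_assoc[symmetric]
  by (rule onorm_scaleR) (rule matrix_vector_mul_bounded_linear)

lemma spec_norm_nonneg: "0 \<le> spec_norm (X :: real^'n^'m)"
  unfolding spec_norm_def by (rule onorm_pos_le) (rule matrix_vector_mul_bounded_linear)

definition ind :: "('i \<Rightarrow> bool) \<Rightarrow> 'i \<Rightarrow> real" where
  "ind b = (\<lambda>P. if b P then 1 else 0)"

definition Phi :: "real \<Rightarrow> real^'n^'n \<Rightarrow> ('n set \<Rightarrow> real) \<Rightarrow> real^'n^'n" where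
  "Phi p M \<theta> = (\<chi> i j. M$i$j * (-1 + \<theta> {i, j} / p))"

lemma E_eq:
  assumes "0 < p" "p < 1"
  shows "sqrt ((1 - p) / p) *\<^sub>R hadamard M (C_mat p b) = Phi p M (ind b)"
proof -
  have s1: "sqrt ((1 - p) / p) * sqrt ((1 - p) / p) = (1 - p) / p" using assms by simp
  have s2: "sqrt ((1 - p) / p) * sqrt (p / (1 - p)) = 1"
    using assms by (simp add: real_sqrt_mult[symmetric])
  show ?thesis
    unfolding Phi_def hadamard_def C_mat_def ind_def
    by (simp add: vec_eq_iff) (use assms s1 s2 in \<open>auto simp: field_simps\<close>)
qed

lemma Phi_comb: "Phi p M (\<lambda>P. l * t1 P + (1 - l) * t2 P) = l *\<^sub>R Phi p M t1 + (1 - l) *\<^sub>R Phi p M t2"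
  unfolding Phi_def by (simp add: vec_eq_iff divide_inverse algebra_simps)

lemma hullA:
  assumes "\<forall>y\<in>A. spec_norm (Phi p M (ind y)) \<le> a" "t \<in> cvx (ind ` A)"
  shows "spec_norm (Phi p M t) \<le> a"
  using assms(2)
proof (induction t rule: cvx.induct)
  case (base s) then show ?case using assms(1) by auto
next
  case (comb t1 t2 l)
  have "spec_norm (Phi p M (\<lambda>P. l * t1 P + (1 - l) * t2 P)) \<le> spec_norm (l *\<^sub>R Phi p M t1) + spec_norm ((1 - l) *\<^sub>R Phi p M t2)"
    unfolding Phi_comb by (rule spec_norm_triangle)
  also have "\<dots> = l * spec_norm (Phi p M t1) + (1 - l) * spec_norm (Phi p M t2)"
    using comb by (simp add: spec_norm_scale)
  also have "\<dots> \<le> l * a + (1 - l) * a"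
    using comb by (intro add_mono mult_left_mono) auto
  finally show ?case by (simp add: algebra_simps)
qed

lemma hullS:
  assumes "s \<in> cvx (UU I A x)"
  shows "\<exists>t\<in>cvx (ind ` A). \<forall>P\<in>I. \<bar>ind x P - t P\<bar> \<le> s P"
  using assms
proof (induction s rule: cvx.induct)
  case (base s)
  then obtain y where s01: "\<forall>i. s i = 0 \<or> s i = 1" and y: "y \<in> A" and yx: "\<forall>i\<in>I. s i = 0 \<longrightarrow> y i = x i"
    unfolding UU_def by auto
  have "ind y \<in> cvx (ind ` A)" using y by (auto intro: cvx.base)
  moreover have "\<forall>P\<in>I. \<bar>ind x P - ind y P\<bar> \<le> s P"
  proof
    fix P assume P: "P \<in> I"
    show "\<bar>ind x P - ind y P\<bar> \<le> s P"
    proof (cases "s P = 0")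
      case True then show ?thesis using yx P by (simp add: ind_def)
    next
      case False then have "s P = 1" using s01 by blast
      then show ?thesis by (simp add: ind_def)
    qed
  qed
  ultimately show ?case by blast
next
  case (comb s1 s2 l)
  obtain t1 where t1: "t1 \<in> cvx (ind ` A)" "\<forall>P\<in>I. \<bar>ind x P - t1 P\<bar> \<le> s1 P" using comb by blast
  obtain t2 where t2: "t2 \<in> cvx (ind ` A)" "\<forall>P\<in>I. \<bar>ind x P - t2 P\<bar> \<le> s2 P" using comb by blast
  have c1: "(\<lambda>P. l * t1 P + (1 - l) * t2 P) \<in> cvx (ind ` A)" using t1(1) t2(1) comb(3,4) by (rule cvx.comb)
  have c2: "\<forall>P\<in>I. \<bar>ind x P - (l * t1 P + (1 - l) * t2 P)\<bar> \<le> l * s1 P + (1 - l) * s2 P"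
  proof
    fix P assume P: "P \<in> I"
    have "ind x P - (l * t1 P + (1 - l) * t2 P) = l * (ind x P - t1 P) + (1 - l) * (ind x P - t2 P)"
      by (simp add: algebra_simps)
    also have "\<bar>\<dots>\<bar> \<le> \<bar>l * (ind x P - t1 P)\<bar> + \<bar>(1 - l) * (ind x P - t2 P)\<bar>" by (rule abs_triangle_ineq)
    also have "\<dots> = l * \<bar>ind x P - t1 P\<bar> + (1 - l) * \<bar>ind x P - t2 P\<bar>" using comb by (simp add: abs_mult)
    also have "\<dots> \<le> l * s1 P + (1 - l) * s2 P" using comb t1 t2 P by (intro add_mono mult_left_mono) auto
    finally show "\<bar>ind x P - (l * t1 P + (1 - l) * t2 P)\<bar> \<le> l * s1 P + (1 - l) * s2 P" .
  qed
  show ?case by (rule bexI[OF _ c1]) (use c2 in simp)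
qed

lemma Phi_diff: "Phi p M t1 - Phi p M t2 = (\<chi> i j. M$i$j * ((t1 {i, j} - t2 {i, j}) / p))"
  unfolding Phi_def by (simp add: vec_eq_iff algebra_simps diff_divide_distrib)

lemma pair_sum:
  fixes h :: "'n::finite set \<Rightarrow> real"
  assumes "\<And>P. 0 \<le> h P"
  shows "(\<Sum>i\<in>UNIV. \<Sum>j\<in>UNIV. h {i, j}) \<le> 2 * (\<Sum>P\<in>sym_pairs. h P)"
proof -
  let ?g = "\<lambda>x::'n \<times> 'n. {fst x, snd x}"
  have "(\<Sum>i\<in>UNIV. \<Sum>j\<in>UNIV. h {i, j}) = (\<Sum>x\<in>UNIV \<times> UNIV. h (?g x))"
    by (simp add: sum.cartesian_product split_def)
  also have "\<dots> = (\<Sum>P\<in>(sym_pairs :: 'n set set). \<Sum>x\<in>{x \<in> UNIV \<times> UNIV. ?g x = P}. h (?g x))"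
    by (rule sum.group[symmetric]) (simp, simp, unfold sym_pairs_def, blast)
  also have "\<dots> = (\<Sum>P\<in>(sym_pairs :: 'n set set). real (card {x \<in> UNIV \<times> UNIV. ?g x = P}) * h P)"
    by (intro sum.cong refl) simp
  also have "\<dots> \<le> (\<Sum>P\<in>(sym_pairs :: 'n set set). 2 * h P)"
  proof (intro sum_mono mult_right_mono assms)
    fix P :: "'n set" assume "P \<in> sym_pairs"
    then obtain i j where P: "P = {i, j}" unfolding sym_pairs_def by blast
    have "{x \<in> UNIV \<times> UNIV. ?g x = P} \<subseteq> {(i, j), (j, i)}"
    proof
      fix x assume "x \<in> {x \<in> UNIV \<times> UNIV. ?g x = P}"
      then have "{fst x, snd x} = {i, j}" using P by simp
      then have "(fst x = i \<and> snd x = j) \<or> (fst x = j \<and> snd x = i)" by (simp add: doubleton_eq_iff)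
      then show "x \<in> {(i, j), (j, i)}" by (cases x) auto
    qed
    then have "card {x \<in> UNIV \<times> UNIV. ?g x = P} \<le> card {(i, j), (j, i)}"
      by (rule card_mono[rotated]) simp
    also have "\<dots> \<le> 2" by (cases "i = j") auto
    finally show "real (card {x \<in> UNIV \<times> UNIV. ?g x = P}) \<le> 2" by simp
  qed
  also have "\<dots> = 2 * (\<Sum>P\<in>sym_pairs. h P)" by (simp add: sum_distrib_left)
  finally show ?thesis .
qed

lemma lip_main:
  fixes M :: "real^'n::finite^'n"
  assumes p: "0 < p" and hA: "\<forall>y\<in>A. spec_norm (Phi p M (ind y)) \<le> a"
    and Kb: "\<And>i j. \<bar>M$i$j\<bar> \<le> Km"
    and s: "s \<in> cvx (UU sym_pairs A x)"
  shows "spec_norm (Phi p M (ind x)) \<le> a + sqrt 2 * (Km / p) * sqrt (FF sym_pairs s)"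
proof -
  obtain t where t: "t \<in> cvx (ind ` A)" and ts: "\<forall>P\<in>sym_pairs. \<bar>ind x P - t P\<bar> \<le> s P"
    using hullS[OF s] by blast
  have Km0: "0 \<le> Km" using Kb[of undefined undefined] by simp
  let ?D = "(\<chi> i j. M$i$j * ((ind x {i, j} - t {i, j}) / p)) :: real^'n^'n"
  have eq: "Phi p M (ind x) = Phi p M t + ?D" unfolding Phi_diff[symmetric] by simp
  have "spec_norm (Phi p M (ind x)) = spec_norm (Phi p M t + ?D)" by (subst eq) (rule refl)
  also have "\<dots> \<le> spec_norm (Phi p M t) + spec_norm ?D" by (rule spec_norm_triangle)
  also have "\<dots> \<le> a + sqrt (\<Sum>i\<in>UNIV. \<Sum>j\<in>UNIV. (?D$i$j)^2)"
    by (intro add_mono hullA[OF hA t] spec_norm_frob)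
  also have "\<dots> \<le> a + sqrt (\<Sum>i\<in>UNIV. \<Sum>j\<in>UNIV. (Km / p)^2 * (s {i, j})^2)"
  proof (intro add_left_mono real_sqrt_le_mono sum_mono)
    fix i j :: 'n
    have ij: "{i, j} \<in> sym_pairs" unfolding sym_pairs_def by blast
    have "\<bar>?D$i$j\<bar> = \<bar>M$i$j\<bar> * \<bar>ind x {i, j} - t {i, j}\<bar> / p" using p by (simp add: abs_mult)
    also have "\<dots> \<le> Km * s {i, j} / p"
      using ts ij Kb[of i j] p by (intro divide_right_mono mult_mono) auto
    finally have "\<bar>?D$i$j\<bar> \<le> (Km / p) * s {i, j}" by simp
    then have "\<bar>?D$i$j\<bar>^2 \<le> ((Km / p) * s {i, j})^2" by (rule power_mono) simp
    moreover have "(?D$i$j)^2 = \<bar>?D$i$j\<bar>^2" by (rule power2_abs[symmetric])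
    moreover have "((Km / p) * s {i, j})^2 = (Km / p)^2 * (s {i, j})^2" by (rule power_mult_distrib)
    ultimately show "(?D$i$j)^2 \<le> (Km / p)^2 * (s {i, j})^2" by linarith
  qed
  also have "\<dots> \<le> a + sqrt ((Km / p)^2 * (2 * FF sym_pairs s))"
  proof (intro add_left_mono real_sqrt_le_mono)
    have "(\<Sum>i\<in>UNIV. \<Sum>j\<in>UNIV. (Km / p)^2 * (s {i, j})^2) = (Km / p)^2 * (\<Sum>i\<in>UNIV. \<Sum>j\<in>UNIV. (s {i, j})^2)"
      by (simp add: sum_distrib_left)
    also have "\<dots> \<le> (Km / p)^2 * (2 * FF sym_pairs s)"
      unfolding FF_def by (intro mult_left_mono pair_sum) auto
    finally show "(\<Sum>i\<in>UNIV. \<Sum>j\<in>UNIV. (Km / p)^2 * (s {i, j})^2) \<le> (Km / p)^2 * (2 * FF sym_pairs s)" .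
  qed
  also have "\<dots> = a + sqrt 2 * (Km / p) * sqrt (FF sym_pairs s)"
    using Km0 p by (simp add: real_sqrt_mult)
  finally show ?thesis .
qed

lemma tail_abstract:
  assumes q0: "\<forall>b. 0 \<le> q b" and q1: "q True + q False = 1" and fin: "finite I"
    and L: "0 < L" and t: "0 \<le> t"
    and lip: "\<And>x s. s \<in> cvx (UU I A x) \<Longrightarrow> f x \<le> a + L * sqrt (FF I s)"
    and X: "\<And>x. x \<in> X \<Longrightarrow> a + t \<le> f x"
  shows "PP q I A * PP q I X * exp (t^2 / (4 * L^2)) \<le> 1"
proof (cases "A = {}")
  case True then show ?thesis by (simp add: PP_empty)
next
  case False
  have DX: "t^2 / L^2 \<le> DD I A x" if x: "x \<in> X" for x
    unfolding DD_def
  proof (rule cInf_greatest)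
    show "FF I ` cvx (UU I A x) \<noteq> {}" using cvx_nonempty[OF UU_nonempty[OF False]] by blast
  next
    fix v assume "v \<in> FF I ` cvx (UU I A x)"
    then obtain s where s: "s \<in> cvx (UU I A x)" and v: "v = FF I s" by blast
    have "t \<le> L * sqrt (FF I s)" using lip[OF s] X[OF x] by linarith
    then have "t / L \<le> sqrt (FF I s)" using L by (simp add: divide_le_eq mult.commute)
    then have "(t / L)^2 \<le> (sqrt (FF I s))^2" by (rule power_mono) (use t L in simp)
    then show "t^2 / L^2 \<le> v" using FF_nonneg[of I s] v by (simp add: power_divide)
  qed
  have "PP q I X * exp (t^2 / (4 * L^2)) = (\<Sum>x\<in>SP I \<inter> X. wt q I x * exp (t^2 / (4 * L^2)))"
    unfolding PP_def by (simp add: sum_distrib_right)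
  also have "\<dots> \<le> (\<Sum>x\<in>SP I \<inter> X. wt q I x * exp (DD I A x / 4))"
  proof (intro sum_mono mult_left_mono)
    fix x assume "x \<in> SP I \<inter> X"
    then have "t^2 / L^2 \<le> DD I A x" using DX by blast
    then show "exp (t^2 / (4 * L^2)) \<le> exp (DD I A x / 4)" by (simp add: field_simps)
  qed (simp add: wt_nonneg q0)
  also have "\<dots> \<le> EE q I A"
    unfolding EE_def by (rule sum_mono2) (auto simp: finite_SP fin wt_nonneg q0)
  finally have h: "PP q I X * exp (t^2 / (4 * L^2)) \<le> EE q I A" .
  have "PP q I A * PP q I X * exp (t^2 / (4 * L^2)) = PP q I A * (PP q I X * exp (t^2 / (4 * L^2)))" by simp
  also have "\<dots> \<le> PP q I A * EE q I A" by (intro mult_left_mono h PP_nonneg q0)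
  also have "\<dots> \<le> 1" by (rule talagrand[OF q0 q1 fin])
  finally show ?thesis .
qed

definition qb :: "real \<Rightarrow> bool \<Rightarrow> real" where "qb p = (\<lambda>b. if b then p else 1 - p)"

lemma finite_sym_pairs: "finite (sym_pairs :: 'n::finite set set)" by simp

lemma pmf_sign: "0 \<le> p \<Longrightarrow> p \<le> 1 \<Longrightarrow>
   pmf (sign_pmf p) (x :: 'n::finite set \<Rightarrow> bool) = (if x \<in> SP sym_pairs then wt (qb p) sym_pairs x else 0)"
proof -
  assume p: "0 \<le> p" "p \<le> 1"
  have "pmf (sign_pmf p) x = (if \<forall>i. i \<notin> sym_pairs \<longrightarrow> x i = False then \<Prod>i\<in>sym_pairs. pmf (bernoulli_pmf p) (x i) else 0)"
    unfolding sign_pmf_def by (rule pmf_Pi) simp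
  also have "\<dots> = (if x \<in> SP sym_pairs then wt (qb p) sym_pairs x else 0)"
    unfolding SP_iff wt_def qb_def using p by (auto intro!: prod.cong)
  finally show ?thesis .
qed

lemma prob_sign:
  assumes "0 \<le> p" "p \<le> 1"
  shows "measure_pmf.prob (sign_pmf p) (X :: ('n::finite set \<Rightarrow> bool) set) = PP (qb p) sym_pairs X"
proof -
  have "measure_pmf.prob (sign_pmf p) X = sum (pmf (sign_pmf p)) X"
    by (rule measure_measure_pmf_finite) simp
  also have "\<dots> = (\<Sum>x\<in>X. if x \<in> SP sym_pairs then wt (qb p) sym_pairs x else 0)"
    using assms by (simp add: pmf_sign)
  also have "\<dots> = (\<Sum>x\<in>X \<inter> SP sym_pairs. wt (qb p) sym_pairs x)"
    by (rule sum.inter_restrict[symmetric]) simp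
  also have "\<dots> = PP (qb p) sym_pairs X" unfolding PP_def by (simp add: Int_commute)
  finally show ?thesis .
qed

lemma exp_sign:
  assumes "0 \<le> p" "p \<le> 1"
  shows "measure_pmf.expectation (sign_pmf p) (f :: ('n::finite set \<Rightarrow> bool) \<Rightarrow> real)
          = (\<Sum>x\<in>SP sym_pairs. wt (qb p) sym_pairs x * f x)"
proof -
  have "measure_pmf.expectation (sign_pmf p) f = (\<Sum>x\<in>UNIV. f x * pmf (sign_pmf p) x)"
    by (rule integral_measure_pmf_real) auto
  also have "\<dots> = (\<Sum>x\<in>UNIV. if x \<in> SP sym_pairs then wt (qb p) sym_pairs x * f x else 0)"
    using assms by (intro sum.cong) (auto simp: pmf_sign)
  also have "\<dots> = (\<Sum>x\<in>UNIV \<inter> SP sym_pairs. wt (qb p) sym_pairs x * f x)"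
    by (rule sum.inter_restrict[symmetric]) simp
  finally show ?thesis by simp
qed

lemma qb0: "0 \<le> p \<Longrightarrow> p \<le> 1 \<Longrightarrow> \<forall>b. 0 \<le> qb p b" by (simp add: qb_def)
lemma qb1: "qb p True + qb p False = 1" by (simp add: qb_def)

lemma max_entry_bound: "\<bar>M$i$j\<bar> \<le> max_abs_entry (M :: real^'n::finite^'m::finite)"
  unfolding max_abs_entry_def
proof (rule Max_ge)
  have "{\<bar>M $ i $ j\<bar> |i j. True} = (\<lambda>(i, j). \<bar>M $ i $ j\<bar>) ` UNIV" by auto
  then show "finite {\<bar>M $ i $ j\<bar> |i j. True}" by simp
qed blast

abbreviation fE :: "real \<Rightarrow> real^'n::finite^'n \<Rightarrow> ('n set \<Rightarrow> bool) \<Rightarrow> real" where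
  "fE p M b \<equiv> spec_norm (sqrt ((1 - p) / p) *\<^sub>R hadamard M (C_mat p b))"

lemma one_sided:
  fixes M :: "real^'n::finite^'n"
  assumes p: "0 < p" "p < 1" and Kp: "0 < max_abs_entry M" and t: "0 \<le> t"
    and hA: "\<And>y. y \<in> A \<Longrightarrow> fE p M y \<le> a"
    and X: "\<And>x. x \<in> X \<Longrightarrow> a + t \<le> fE p M x"
  shows "measure_pmf.prob (sign_pmf p) A * measure_pmf.prob (sign_pmf p) X
          * exp (p^2 / (8 * (max_abs_entry M)^2) * t^2) \<le> 1"
proof -
  let ?K = "max_abs_entry M"
  let ?L = "sqrt 2 * (?K / p)"
  have Lp: "0 < ?L" using p Kp by simp
  have eqf: "fE p M b = spec_norm (Phi p M (ind b))" for b by (subst E_eq[OF p]) (rule refl)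
  have hA': "\<forall>y\<in>A. spec_norm (Phi p M (ind y)) \<le> a" using hA eqf by simp
  have "PP (qb p) sym_pairs A * PP (qb p) sym_pairs X * exp (t^2 / (4 * ?L^2)) \<le> 1"
  proof (rule tail_abstract[OF qb0 qb1 finite_sym_pairs Lp t])
    show "fE p M x \<le> a + ?L * sqrt (FF sym_pairs s)" if "s \<in> cvx (UU sym_pairs A x)" for x s
      using lip_main[OF p(1) hA' max_entry_bound that] eqf by (simp add: mult.assoc)
  qed (use p X in auto)
  moreover have "t^2 / (4 * ?L^2) = p^2 / (8 * ?K^2) * t^2"
    using p Kp by (simp add: power_divide power_mult_distrib field_simps)
  ultimately show ?thesis using p by (simp add: prob_sign)
qed

theorem tail_main:
  fixes M :: "real^'n::finite^'n"
  assumes p: "0 < p" "p < 1" and med: "is_median (sign_pmf p) (fE p M) m" and t: "0 < t"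
  shows "measure_pmf.prob (sign_pmf p) {b. \<bar>fE p M b - m\<bar> > t}
           \<le> 4 * exp (- (p^2 / (8 * (max_abs_entry M)^2)) * t^2)"
proof (cases "max_abs_entry M = 0")
  case True
  have "measure_pmf.prob (sign_pmf p) {b. \<bar>fE p M b - m\<bar> > t} \<le> 1" by simp
  moreover have "4 * exp (- (p^2 / (8 * (max_abs_entry M)^2)) * t^2) = 4" using True by simp
  ultimately show ?thesis by linarith
next
  case False
  have K0: "0 \<le> max_abs_entry M" using max_entry_bound[of M undefined undefined] by simp
  then have Kp: "0 < max_abs_entry M" using False by simp
  let ?c = "p^2 / (8 * (max_abs_entry M)^2) * t^2"
  let ?P = "measure_pmf.prob (sign_pmf p)"
  have m1: "1/2 \<le> ?P {b. fE p M b \<le> m}" and m2: "1/2 \<le> ?P {b. fE p M b \<ge> m}"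
    using med unfolding is_median_def by auto
  have up: "?P {b. fE p M b \<le> m} * ?P {b. m + t < fE p M b} * exp ?c \<le> 1"
    by (rule one_sided[OF p Kp less_imp_le[OF t]]) auto
  have lo: "?P {b. fE p M b < m - t} * ?P {b. m \<le> fE p M b} * exp ?c \<le> 1"
    by (rule one_sided[OF p Kp less_imp_le[OF t], where a = "m - t"]) auto
  have e: "exp ?c * exp (- ?c) = 1" by (simp add: exp_add[symmetric])
  have up2: "?P {b. m + t < fE p M b} \<le> 2 * exp (- ?c)"
  proof -
    have "(1/2) * ?P {b. m + t < fE p M b} * exp ?c \<le> 1"
      using up m1 by (smt (verit, best) exp_gt_zero measure_nonneg mult_right_mono)
    then have "?P {b. m + t < fE p M b} * exp ?c \<le> 2" by simp
    then have "?P {b. m + t < fE p M b} \<le> 2 / exp ?c"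
      using pos_le_divide_eq[of "exp ?c" "?P {b. m + t < fE p M b}" 2] by simp
    moreover have "2 / exp ?c = 2 * exp (- ?c)" by (simp add: exp_minus field_simps)
    ultimately show ?thesis by simp
  qed
  have lo2: "?P {b. fE p M b < m - t} \<le> 2 * exp (- ?c)"
  proof -
    have "(1/2) * ?P {b. fE p M b < m - t} * exp ?c \<le> 1"
      using lo m2 by (smt (verit, best) exp_gt_zero measure_nonneg mult_left_mono mult_right_mono mult.commute)
    then have "?P {b. fE p M b < m - t} * exp ?c \<le> 2" by simp
    then have "?P {b. fE p M b < m - t} \<le> 2 / exp ?c"
      using pos_le_divide_eq[of "exp ?c" "?P {b. fE p M b < m - t}" 2] by simp
    moreover have "2 / exp ?c = 2 * exp (- ?c)" by (simp add: exp_minus field_simps)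
    ultimately show ?thesis by simp
  qed
  have "{b. \<bar>fE p M b - m\<bar> > t} = {b. m + t < fE p M b} \<union> {b. fE p M b < m - t}" by auto
  then have "?P {b. \<bar>fE p M b - m\<bar> > t} \<le> ?P {b. m + t < fE p M b} + ?P {b. fE p M b < m - t}"
    by (simp add: measure_Un_le)
  also have "\<dots> \<le> 4 * exp (- ?c)" using up2 lo2 by simp
  finally show ?thesis by simp
qed

lemma layer_x:
  assumes y: "0 \<le> y" and k: "1 \<le> k"
  shows "has_bochner_integral lborel (\<lambda>t. indicator {0..<y} t * (real k * t^(k-1))) (y^k)"
proof -
  have int1: "integrable lborel (\<lambda>t. (real k * t^(k-1)) * indicator {0..y} t)"
    by (rule borel_integrable_atLeastAtMost) (auto intro!: continuous_intros)
  have val1: "(LBINT t. indicator {0..y} t *\<^sub>R (real k * t^(k-1))) = y^k - 0^k"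
  proof (rule integral_FTC_atLeastAtMost[OF y])
    fix x show "((\<lambda>t. t^k) has_vector_derivative (real k * x^(k-1))) (at x within {0..y})"
      unfolding has_real_derivative_iff_has_vector_derivative[symmetric]
      by (auto intro!: derivative_eq_intros)
  qed (auto intro!: continuous_intros)
  have hb1: "has_bochner_integral lborel (\<lambda>t. indicator {0..y} t * (real k * t^(k-1))) (y^k)"
    using int1 val1 k by (simp add: has_bochner_integral_iff mult.commute)
  show ?thesis
  proof (subst has_bochner_integral_cong_AE)
    show "AE t in lborel. indicator {0..<y} t * (real k * t^(k-1)) = indicator {0..y} t * (real k * t^(k-1))"
      using AE_lborel_singleton[of y] by eventually_elim (auto split: split_indicator)
  qed (use hb1 in auto)
qed

lemma gauss_scaled:
  fixes \<sigma> :: real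
  assumes s: "0 < \<sigma>" and hb: "has_bochner_integral lborel (\<lambda>x. indicator {0..} x *\<^sub>R (exp (- x\<^sup>2) * x^j)) m"
  shows "has_bochner_integral lborel (\<lambda>t. indicator {0..} t *\<^sub>R (exp (- t\<^sup>2 / \<sigma>) * t^j)) (sqrt \<sigma> ^ (j+1) * m)"
proof -
  let ?c = "sqrt \<sigma>"
  have c: "0 < ?c" using s by simp
  define G where "G = (\<lambda>t::real. indicator {0..} t *\<^sub>R (exp (- t\<^sup>2 / \<sigma>) * t^j) :: real)"
  have eqf: "(\<lambda>x. G (0 + ?c * x)) = (\<lambda>x. ?c ^ j * (indicator {0..} x *\<^sub>R (exp (- x\<^sup>2) * x^j)))"
  proof
    fix x
    have i: "indicator {0..} (?c * x) = (indicator {0..} x :: real)"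
      using c by (auto split: split_indicator simp: zero_le_mult_iff)
    have e: "(?c * x)\<^sup>2 / \<sigma> = x\<^sup>2" using s by (simp add: power_mult_distrib)
    show "G (0 + ?c * x) = ?c ^ j * (indicator {0..} x *\<^sub>R (exp (- x\<^sup>2) * x^j))"
      unfolding G_def using i e by (simp add: power_mult_distrib minus_divide_left[symmetric])
  qed
  have h: "has_bochner_integral lborel (\<lambda>x. G (0 + ?c * x)) (?c ^ j * m)"
    unfolding eqf by (rule has_bochner_integral_mult_right[OF hb])
  have v: "(?c ^ (j+1) * m) /\<^sub>R \<bar>?c\<bar> = ?c ^ j * m" using c by simp
  have h2: "has_bochner_integral lborel (\<lambda>x. G (0 + ?c * x)) ((?c ^ (j+1) * m) /\<^sub>R \<bar>?c\<bar>)"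
    unfolding v by (rule h)
  have cne: "?c \<noteq> 0" using c by simp
  have "has_bochner_integral lborel G (?c ^ (j+1) * m)"
    by (rule iffD2[OF lborel_has_bochner_integral_real_affine_iff[OF cne] h2])
  then show ?thesis unfolding G_def .
qed

lemma moment_bound:
  fixes S :: "'x set" and w Y :: "'x \<Rightarrow> real" and \<sigma> V :: real and k :: nat
  assumes fin: "finite S" and w0: "\<And>x. x \<in> S \<Longrightarrow> 0 \<le> w x"
    and Y0: "\<And>x. x \<in> S \<Longrightarrow> 0 \<le> Y x" and wsum: "sum w S \<le> 1"
    and k: "1 \<le> k"
    and tail: "\<And>t. 0 < t \<Longrightarrow> sum w {x\<in>S. t < Y x} \<le> 4 * exp (- t\<^sup>2 / \<sigma>)"
    and G: "has_bochner_integral lborel (\<lambda>t. indicator {0..} t *\<^sub>R (exp (- t\<^sup>2 / \<sigma>) * t^(k-1))) V"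
  shows "(\<Sum>x\<in>S. w x * Y x ^ k) \<le> 4 * real k * V"
proof -
  let ?f = "\<lambda>t. \<Sum>x\<in>S. w x * (indicator {0..<Y x} t * (real k * t^(k-1)))"
  let ?g = "\<lambda>t. (4 * real k) * (indicator {0..} t *\<^sub>R (exp (- t\<^sup>2 / \<sigma>) * t^(k-1)))"
  have hf: "has_bochner_integral lborel ?f (\<Sum>x\<in>S. w x * Y x ^ k)"
    by (rule has_bochner_integral_sum, rule has_bochner_integral_mult_right, rule layer_x[OF Y0 k]) simp
  have hg: "has_bochner_integral lborel ?g (4 * real k * V)"
    by (rule has_bochner_integral_mult_right[OF G])
  have "integral\<^sup>L lborel ?f \<le> integral\<^sup>L lborel ?g"
  proof (rule integral_mono)
    show "integrable lborel ?f" using hf by (simp add: has_bochner_integral_iff)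
    show "integrable lborel ?g" using hg by (simp add: has_bochner_integral_iff)
  next
    fix t :: real
    show "?f t \<le> ?g t"
    proof (cases "0 \<le> t")
      case False
      then show ?thesis by (simp add: indicator_def)
    next
      case True
      have "?f t = (\<Sum>x\<in>S. if t < Y x then w x * (real k * t^(k-1)) else 0)"
        using True by (intro sum.cong) (auto simp: indicator_def)
      also have "\<dots> = (\<Sum>x\<in>{x\<in>S. t < Y x}. w x * (real k * t^(k-1)))"
        by (rule sum.inter_filter[symmetric, OF fin])
      also have "\<dots> = sum w {x\<in>S. t < Y x} * (real k * t^(k-1))"
        by (simp add: sum_distrib_right)
      also have "\<dots> \<le> (4 * exp (- t\<^sup>2 / \<sigma>)) * (real k * t^(k-1))"
      proof (rule mult_right_mono)
        show "sum w {x\<in>S. t < Y x} \<le> 4 * exp (- t\<^sup>2 / \<sigma>)"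
        proof (cases "t = 0")
          case True
          have "sum w {x\<in>S. t < Y x} \<le> sum w S"
            using fin w0 by (intro sum_mono2) auto
          then show ?thesis using wsum True by simp
        next
          case False then show ?thesis using tail True by simp
        qed
      qed (use True in simp)
      also have "\<dots> = ?g t" using True by (simp add: indicator_def)
      finally show ?thesis .
    qed
  qed
  moreover have "integral\<^sup>L lborel ?f = (\<Sum>x\<in>S. w x * Y x ^ k)" by (rule has_bochner_integral_integral_eq[OF hf])
  moreover have "integral\<^sup>L lborel ?g = 4 * real k * V" by (rule has_bochner_integral_integral_eq[OF hg])
  ultimately show ?thesis by linarith
qed

lemma moments_abstract:
  fixes S :: "'x set" and w f :: "'x \<Rightarrow> real" and \<sigma> m :: real
  assumes fin: "finite S" and w0: "\<And>x. x \<in> S \<Longrightarrow> 0 \<le> w x" and wsum: "sum w S = 1"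
    and f0: "\<And>x. 0 \<le> f x" and m0: "0 \<le> m" and s: "0 < \<sigma>"
    and tail: "\<And>t. 0 < t \<Longrightarrow> sum w {x\<in>S. t < \<bar>f x - m\<bar>} \<le> 4 * exp (- t\<^sup>2 / \<sigma>)"
  shows "(\<Sum>x\<in>S. w x * (f x)^2) \<le> m^2 + 4 * \<sigma> + 4 * m * sqrt (pi * \<sigma>)"
    and "(\<Sum>x\<in>S. w x * (f x)^3) \<le> 4 * m^3 + 12 * sqrt pi * sqrt \<sigma> ^ 3"
proof -
  let ?Y = "\<lambda>x. \<bar>f x - m\<bar>"
  have Y0: "\<And>x. x \<in> S \<Longrightarrow> 0 \<le> ?Y x" by simp
  have ws: "sum w S \<le> 1" using wsum by simp
  have g0: "has_bochner_integral lborel (\<lambda>x::real. indicator {0..} x *\<^sub>R (exp (- x\<^sup>2) * x^0)) (sqrt pi / 2)"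
    using gaussian_moment_0 by simp
  have g1: "has_bochner_integral lborel (\<lambda>x::real. indicator {0..} x *\<^sub>R (exp (- x\<^sup>2) * x^1)) (1 / 2 :: real)"
    using gaussian_moment_1 by simp
  have g2: "has_bochner_integral lborel (\<lambda>x::real. indicator {0..} x *\<^sub>R (exp (- x\<^sup>2) * x^2)) (sqrt pi / 4)"
    using gaussian_moment_even_pos[of 1] by simp
  have GE1: "has_bochner_integral lborel (\<lambda>t. indicator {0..} t *\<^sub>R (exp (- t\<^sup>2 / \<sigma>) * t^(1-1))) (sqrt \<sigma> ^ (0+1) * (sqrt pi / 2))"
    using gauss_scaled[OF s g0] by simp
  have E1: "(\<Sum>x\<in>S. w x * ?Y x ^ 1) \<le> 4 * real 1 * (sqrt \<sigma> ^ (0+1) * (sqrt pi / 2))"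
    using moment_bound[where k=1, OF fin w0 Y0 ws order_refl tail GE1] by simp
  have GE2: "has_bochner_integral lborel (\<lambda>t. indicator {0..} t *\<^sub>R (exp (- t\<^sup>2 / \<sigma>) * t^(2-1))) (sqrt \<sigma> ^ (1+1) * (1 / 2))"
    using gauss_scaled[OF s g1] by simp
  have E2: "(\<Sum>x\<in>S. w x * ?Y x ^ 2) \<le> 4 * real 2 * (sqrt \<sigma> ^ (1+1) * (1 / 2))"
    using moment_bound[where k=2, OF fin w0 Y0 ws _ tail GE2] by simp
  have GE3: "has_bochner_integral lborel (\<lambda>t. indicator {0..} t *\<^sub>R (exp (- t\<^sup>2 / \<sigma>) * t^(3-1))) (sqrt \<sigma> ^ (2+1) * (sqrt pi / 4))"
    using gauss_scaled[OF s g2] by simp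
  have E3: "(\<Sum>x\<in>S. w x * ?Y x ^ 3) \<le> 4 * real 3 * (sqrt \<sigma> ^ (2+1) * (sqrt pi / 4))"
    using moment_bound[where k=3, OF fin w0 Y0 ws _ tail GE3] by simp
  have fle: "f x \<le> m + ?Y x" for x by linarith
  show "(\<Sum>x\<in>S. w x * (f x)^2) \<le> m^2 + 4 * \<sigma> + 4 * m * sqrt (pi * \<sigma>)"
  proof -
    have "(\<Sum>x\<in>S. w x * (f x)^2) \<le> (\<Sum>x\<in>S. w x * (m^2 + 2 * m * ?Y x + ?Y x ^ 2))"
    proof (intro sum_mono mult_left_mono w0)
      fix x
      have "(f x)^2 \<le> (m + ?Y x)^2" by (rule power_mono[OF fle f0])
      then show "(f x)^2 \<le> m^2 + 2 * m * ?Y x + ?Y x ^ 2" by (simp add: power2_sum)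
    qed
    also have "\<dots> = m^2 * sum w S + 2 * m * (\<Sum>x\<in>S. w x * ?Y x ^ 1) + (\<Sum>x\<in>S. w x * ?Y x ^ 2)"
      by (simp add: algebra_simps sum.distrib sum_distrib_left sum_distrib_right[symmetric])
    also have "\<dots> \<le> m^2 * 1 + 2 * m * (4 * real 1 * (sqrt \<sigma> ^ (0+1) * (sqrt pi / 2))) + 4 * real 2 * (sqrt \<sigma> ^ (1+1) * (1 / 2))"
      using E1 E2 m0 wsum by (intro add_mono mult_left_mono) auto
    also have "\<dots> = m^2 + 4 * \<sigma> + 4 * m * sqrt (pi * \<sigma>)"
      using s by (simp add: real_sqrt_mult)
    finally show ?thesis .
  qed
  show "(\<Sum>x\<in>S. w x * (f x)^3) \<le> 4 * m^3 + 12 * sqrt pi * sqrt \<sigma> ^ 3"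
  proof -
    have "(\<Sum>x\<in>S. w x * (f x)^3) \<le> (\<Sum>x\<in>S. w x * (4 * m^3 + 4 * ?Y x ^ 3))"
    proof (intro sum_mono mult_left_mono w0)
      fix x
      have "(f x)^3 \<le> (m + ?Y x)^3" by (rule power_mono[OF fle f0])
      also have "\<dots> \<le> 4 * m^3 + 4 * ?Y x ^ 3"
      proof -
        have "0 \<le> (m + ?Y x) * (m - ?Y x)^2" using m0 by simp
        then show ?thesis by (simp add: power2_eq_square power3_eq_cube algebra_simps)
      qed
      finally show "(f x)^3 \<le> 4 * m^3 + 4 * ?Y x ^ 3" .
    qed
    also have "\<dots> = 4 * m^3 * sum w S + 4 * (\<Sum>x\<in>S. w x * ?Y x ^ 3)"
      by (simp add: algebra_simps sum.distrib sum_distrib_left sum_distrib_right[symmetric])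
    also have "\<dots> \<le> 4 * m^3 * 1 + 4 * (4 * real 3 * (sqrt \<sigma> ^ (2+1) * (sqrt pi / 4)))"
      using E3 wsum by simp
    also have "\<dots> = 4 * m^3 + 12 * sqrt pi * sqrt \<sigma> ^ 3" by simp
    finally show ?thesis .
  qed
qed

theorem mainTheorem6:
  fixes p :: real and M :: "real^'n::finite^'n" and mE :: real
  assumes "0 < p" "p < 1"
    and "is_median (sign_pmf p)
           (\<lambda>b. spec_norm (sqrt ((1 - p) / p) *\<^sub>R hadamard M (C_mat p b))) mE"
  shows "(\<forall>t>0. measure_pmf.prob (sign_pmf p)
             {b. \<bar>spec_norm (sqrt ((1 - p) / p) *\<^sub>R hadamard M (C_mat p b)) - mE\<bar> > t}
           \<le> 4 * exp (- (p^2 / (8 * (max_abs_entry M)^2)) * t^2))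
       \<and> measure_pmf.expectation (sign_pmf p)
             (\<lambda>b. (spec_norm (sqrt ((1 - p) / p) *\<^sub>R hadamard M (C_mat p b)))^2)
           \<le> mE^2 + 32 * (max_abs_entry M)^2 / p^2
              + 8 * mE * sqrt (2 * pi * (max_abs_entry M)^2 / p^2)
       \<and> measure_pmf.expectation (sign_pmf p)
             (\<lambda>b. (spec_norm (sqrt ((1 - p) / p) *\<^sub>R hadamard M (C_mat p b)))^3)
           \<le> 4 * mE^3 + 12 * sqrt pi * (8 * (max_abs_entry M)^2 / p^2) powr (3/2)"
proof -
  note p = assms(1,2)
  have p01: "0 \<le> p" "p \<le> 1" using p by auto
  let ?K = "max_abs_entry M"
  let ?S = "SP (sym_pairs :: 'n set set)"
  let ?w = "wt (qb p) (sym_pairs :: 'n set set)"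
  have part1: "\<forall>t>0. measure_pmf.prob (sign_pmf p) {b. \<bar>fE p M b - mE\<bar> > t}
           \<le> 4 * exp (- (p^2 / (8 * ?K^2)) * t^2)"
    using tail_main[OF p assms(3)] by blast
  have f0: "\<And>b. 0 \<le> fE p M b" by (rule spec_norm_nonneg)
  have m0: "0 \<le> mE"
  proof (rule ccontr)
    assume "\<not> 0 \<le> mE"
    then have "{b. fE p M b \<le> mE} = {}" using f0 by (auto simp: not_le intro: order.strict_trans2)
    moreover have "1/2 \<le> measure_pmf.prob (sign_pmf p) {b. fE p M b \<le> mE}"
      using assms(3) unfolding is_median_def by auto
    ultimately show False by simp
  qed
  have w0: "\<And>x. x \<in> ?S \<Longrightarrow> 0 \<le> ?w x" using wt_nonneg[OF qb0[OF p01]] by blast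
  have wsum: "sum ?w ?S = 1" by (rule wt_sum[OF _ qb1]) simp
  have E2: "measure_pmf.expectation (sign_pmf p) (\<lambda>b. (fE p M b)^2) = (\<Sum>x\<in>?S. ?w x * (fE p M x)^2)"
    by (rule exp_sign[OF p01])
  have E3: "measure_pmf.expectation (sign_pmf p) (\<lambda>b. (fE p M b)^3) = (\<Sum>x\<in>?S. ?w x * (fE p M x)^3)"
    by (rule exp_sign[OF p01])
  show ?thesis
  proof (cases "?K = 0")
    case True
    have fz: "fE p M b = 0" for b
    proof -
      have Mz: "M$i$j = 0" for i j using max_entry_bound[of M i j] True by simp
      have "fE p M b = spec_norm (Phi p M (ind b))" by (subst E_eq[OF p]) (rule refl)
      also have "\<dots> \<le> sqrt (\<Sum>i\<in>UNIV. \<Sum>j\<in>UNIV. ((Phi p M (ind b))$i$j)^2)" by (rule spec_norm_frob)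
      also have "\<dots> = 0" by (simp add: Phi_def Mz)
      finally show ?thesis using f0[of b] by simp
    qed
    have "measure_pmf.expectation (sign_pmf p) (\<lambda>b. (fE p M b)^2) = 0" by (simp add: fz)
    moreover have "measure_pmf.expectation (sign_pmf p) (\<lambda>b. (fE p M b)^3) = 0" by (simp add: fz)
    moreover have "0 \<le> mE^2 + 32 * ?K^2 / p^2 + 8 * mE * sqrt (2 * pi * ?K^2 / p^2)" using True by simp
    moreover have "0 \<le> 4 * mE^3 + 12 * sqrt pi * (8 * ?K^2 / p^2) powr (3/2)" using True m0 by simp
    ultimately show ?thesis using part1 by simp
  next
    case False
    have K0: "0 \<le> ?K" using max_entry_bound[of M undefined undefined] by simp
    then have Kp: "0 < ?K" using False by simp
    define \<sigma> where "\<sigma> = 8 * ?K^2 / p^2"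
    have s: "0 < \<sigma>" using Kp p by (simp add: \<sigma>_def)
    have tail: "sum ?w {x\<in>?S. t < \<bar>fE p M x - mE\<bar>} \<le> 4 * exp (- t\<^sup>2 / \<sigma>)" if t: "0 < t" for t
    proof -
      have "sum ?w {x\<in>?S. t < \<bar>fE p M x - mE\<bar>} = measure_pmf.prob (sign_pmf p) {b. \<bar>fE p M b - mE\<bar> > t}"
        unfolding prob_sign[OF p01] PP_def by (rule sum.cong) auto
      also have "\<dots> \<le> 4 * exp (- (p^2 / (8 * ?K^2)) * t^2)" using part1 t by blast
      also have "- (p^2 / (8 * ?K^2)) * t^2 = - t\<^sup>2 / \<sigma>" using p Kp by (simp add: \<sigma>_def field_simps)
      finally show ?thesis .
    qed
    note M = moments_abstract[OF finite_SP[OF finite_sym_pairs] w0 wsum f0 m0 s tail]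
    have sq: "sqrt (pi * \<sigma>) = 2 * sqrt (2 * pi * ?K^2 / p^2)"
    proof -
      have e: "pi * \<sigma> = 4 * (2 * pi * ?K^2 / p^2)" by (simp add: \<sigma>_def)
      have "sqrt (pi * \<sigma>) = sqrt 4 * sqrt (2 * pi * ?K^2 / p^2)" unfolding e by (rule real_sqrt_mult)
      moreover have "sqrt (4::real) = 2" by (rule real_sqrt_unique) auto
      ultimately show ?thesis by simp
    qed
    have s3: "sqrt \<sigma> ^ 3 = \<sigma> powr (3/2)"
    proof -
      have "\<sigma> powr (3/2) = \<sigma> powr (1 + 1/2)" by simp
      also have "\<dots> = \<sigma> powr 1 * \<sigma> powr (1/2)" by (rule powr_add)
      also have "\<dots> = \<sigma> * sqrt \<sigma>" using s by (simp add: powr_half_sqrt)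
      also have "\<dots> = sqrt \<sigma> ^ 3" using s by (simp add: power3_eq_cube)
      finally show ?thesis by simp
    qed
    have R2: "measure_pmf.expectation (sign_pmf p) (\<lambda>b. (fE p M b)^2)
        \<le> mE^2 + 32 * ?K^2 / p^2 + 8 * mE * sqrt (2 * pi * ?K^2 / p^2)"
      using M(1) unfolding E2 sq by (simp add: \<sigma>_def)
    have R3: "measure_pmf.expectation (sign_pmf p) (\<lambda>b. (fE p M b)^3)
        \<le> 4 * mE^3 + 12 * sqrt pi * (8 * ?K^2 / p^2) powr (3/2)"
      using M(2) unfolding E3 s3 by (simp add: \<sigma>_def)
    show ?thesis using part1 R2 R3 by blast
  qed
qed

end
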